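(* Under the unregularized objective (the regularized minimax objective induced by $\mathfrak R(h,a,\delta)=\mathcal R(h,a)$), the PuB-AMG subgame perfect equilibrium is not in general continuous: there exists a finite-horizon two-player zero-sum sequential game such that no subgame perfect equilibrium of its PuB-AMG, viewed as a map from public belief states to public decision rules, is continuous.
   Context: A finite-horizon two-player zero-sum sequential game consists of: players $i\in\{0,1\}$; a finite action set $\mathbb{A}$; a set of histories $\mathbb{H}$, at each of which exactly one player $\iota$ acts; each history $h$ determines each player's action-observation history (AOH) $h_i$ (perfect recall) and a public history $h_{\text{pub}}$ (sequence of common-knowledge public observations); an initial history distribution $\mu$; a reward $\mathcal{R}:\mathbb{H}\times\mathbb{A}\to\mathbb{R}$ (player 0 gets $\mathcal R$, player 1 gets $-\mathcal R$); a transition function $\mathcal{T}:\mathbb{H}\times\mathbb{A}\to\Delta(\mathbb{H})$; a horizon $T$. $\mathbb{H}(h_{\text{pub}})$, $\mathbb{H}_i(h_{\text{pub}})$ denote histories/AOHs consistent with $h_{\text{pub}}$; $h_\iota$ is the acting player's AOH at $h$. The PuB-AMG of the game: states (public belief states, PBSs) are $\tilde s\in\Delta(\mathbb{H}(h_{\text{pub}}))$ for public histories $h_{\text{pub}}$; at $\tilde s$ the acting player chooses a public decision rule $\tilde a:\mathbb{H}_\iota(h_{\text{pub}})\to\Delta(\mathbb{A})$; the next PBS arises by sampling $H\sim\tilde s$, $A\sim\tilde a(H_\iota)$, a next history from $\mathcal T(H,A)$, observing its public observation $o$, and taking the posterior over next histories given $\tilde s,\tilde a,o$. Under the unregularized objective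 the stage reward is $\tilde{\mathcal R}(\tilde s,\tilde a)=\mathbb{E}_{H\sim\tilde s}\mathbb{E}_{A\sim\tilde a(H_\iota)}\mathcal R(H,A)$; player 0 maximizes and player 1 minimizes the expected sum of stage rewards. A PuB-AMG policy maps PBSs to decision rules, and a subgame perfect equilibrium is a joint PuB-AMG policy whose restriction to the PuB-AMG started from any PBS is an equilibrium (saddle point) there. *)

theory Defs
  imports "HOL-Probability.Probability" "HOL-Analysis.Analysis"
begin

text \<open>An action-observation history (AOH) is a list of steps; each step
records the player's own action if that player acted (Some a) or None, together with
the observation received.  A public history is the list of public observations.\<close>

type_synonym aoh = "(nat option \<times> nat) list"

record game =
  hists   :: "nat set"
  acts    :: "nat set"
  actor   :: "nat \<Rightarrow> nat"
  aohist  :: "nat \<Rightarrow> nat \<Rightarrow> aoh"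
  pubhist :: "nat \<Rightarrow> nat list"
  time    :: "nat \<Rightarrow> nat"
  init    :: "nat pmf"
  rew     :: "nat \<Rightarrow> nat \<Rightarrow> real"       \<comment> \<open>reward R(h,a) for player 0\<close>
  trans   :: "nat \<Rightarrow> nat \<Rightarrow> nat pmf"
  horizon :: nat

definition wf_game :: "game \<Rightarrow> bool" where
  "wf_game G \<longleftrightarrow>
     finite (acts G) \<and> acts G \<noteq> {} \<and> finite (hists G) \<and>
     (\<forall>h\<in>hists G. actor G h \<in> {0, 1} \<and> time G h \<le> horizon G) \<and>
     set_pmf (init G) \<subseteq> hists G \<and> (\<forall>h\<in>set_pmf (init G). time G h = 0) \<and>
     (\<forall>h\<in>hists G. \<forall>a\<in>acts G. time G h < horizon G \<longrightarrow>
        (\<forall>h'\<in>set_pmf (trans G h a). h' \<in> hists G \<and> time G h' = Suc (time G h) \<and>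
           (\<exists>ob. pubhist G h' = pubhist G h @ [ob]) \<and>
           (\<forall>i\<in>{0::nat, 1}. \<exists>ob. aohist G i h' =
               aohist G i h @ [(if i = actor G h then Some a else None, ob)]))) \<and>
     \<comment> \<open>the public history is common knowledge: determined by each player's AOH\<close>
     (\<forall>i\<in>{0::nat, 1}. \<forall>h1\<in>hists G. \<forall>h2\<in>hists G.
        aohist G i h1 = aohist G i h2 \<longrightarrow> pubhist G h1 = pubhist G h2) \<and>
     \<comment> \<open>acting player and time are determined by the public history\<close>
     (\<forall>h1\<in>hists G. \<forall>h2\<in>hists G. pubhist G h1 = pubhist G h2 \<longrightarrow>
        actor G h1 = actor G h2 \<and> time G h1 = time G h2)"

definition pubs :: "game \<Rightarrow> nat list set" where
  "pubs G = pubhist G ` hists G"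

definition hists_at :: "game \<Rightarrow> nat list \<Rightarrow> nat set" where
  "hists_at G p = {h \<in> hists G. pubhist G h = p}"

definition pact :: "game \<Rightarrow> nat list \<Rightarrow> nat" where
  "pact G p = actor G (SOME h. h \<in> hists_at G p)"

definition ptime :: "game \<Rightarrow> nat list \<Rightarrow> nat" where
  "ptime G p = time G (SOME h. h \<in> hists_at G p)"

definition aohs_at :: "game \<Rightarrow> nat \<Rightarrow> nat list \<Rightarrow> aoh set" where
  "aohs_at G i p = aohist G i ` hists_at G p"

definition pbs :: "game \<Rightarrow> nat list \<Rightarrow> nat pmf set" where
  "pbs G p = {s. set_pmf s \<subseteq> hists_at G p}"

type_synonym drule = "aoh \<Rightarrow> nat pmf"
type_synonym policy = "nat pmf \<Rightarrow> drule"

definition valid_policy :: "game \<Rightarrow> policy \<Rightarrow> bool" where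
  "valid_policy G \<pi> \<longleftrightarrow> (\<forall>p\<in>pubs G. \<forall>s\<in>pbs G p. \<forall>x\<in>aohs_at G (pact G p) p.
      set_pmf (\<pi> s x) \<subseteq> acts G)"

definition stage_reward :: "game \<Rightarrow> nat pmf \<Rightarrow> drule \<Rightarrow> real" where
  "stage_reward G s d = measure_pmf.expectation s
     (\<lambda>h. measure_pmf.expectation (d (aohist G (actor G h) h)) (\<lambda>a. rew G h a))"

definition next_hist :: "game \<Rightarrow> nat pmf \<Rightarrow> drule \<Rightarrow> nat pmf" where
  "next_hist G s d = bind_pmf s (\<lambda>h. bind_pmf (d (aohist G (actor G h) h)) (\<lambda>a. trans G h a))"

definition next_pbs :: "game \<Rightarrow> nat pmf \<Rightarrow> drule \<Rightarrow> nat list \<Rightarrow> nat pmf" where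
  "next_pbs G s d q = cond_pmf (next_hist G s d) {h'. pubhist G h' = q}"

primrec val :: "game \<Rightarrow> policy \<Rightarrow> nat \<Rightarrow> nat pmf \<Rightarrow> real" where
  "val G \<pi> 0 s = 0"
| "val G \<pi> (Suc n) s = stage_reward G s (\<pi> s) +
     measure_pmf.expectation (map_pmf (pubhist G) (next_hist G s (\<pi> s)))
       (\<lambda>q. val G \<pi> n (next_pbs G s (\<pi> s) q))"

definition pbs_value :: "game \<Rightarrow> policy \<Rightarrow> nat list \<Rightarrow> nat pmf \<Rightarrow> real" where
  "pbs_value G \<pi> p s = val G \<pi> (horizon G - ptime G p) s"

definition deviation :: "game \<Rightarrow> nat \<Rightarrow> policy \<Rightarrow> policy \<Rightarrow> bool" where
  "deviation G i \<pi> \<pi>' \<longleftrightarrow> valid_policy G \<pi>' \<and>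
     (\<forall>q\<in>pubs G. \<forall>t\<in>pbs G q. pact G q \<noteq> i \<longrightarrow> \<pi>' t = \<pi> t)"

definition is_SPE :: "game \<Rightarrow> policy \<Rightarrow> bool" where
  "is_SPE G \<pi> \<longleftrightarrow> valid_policy G \<pi> \<and>
     (\<forall>p\<in>pubs G. \<forall>s\<in>pbs G p.
        (\<forall>\<pi>'. deviation G 0 \<pi> \<pi>' \<longrightarrow> pbs_value G \<pi>' p s \<le> pbs_value G \<pi> p s) \<and>
        (\<forall>\<pi>'. deviation G 1 \<pi> \<pi>' \<longrightarrow> pbs_value G \<pi> p s \<le> pbs_value G \<pi>' p s))"

text \<open>Continuity of a policy as a map from PBSs to public decision rules: for each public
history p, the map from the simplex Delta(H(p)) (coordinates pmf s h) to the decision rules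
on H_iota(p) (coordinates pmf (d x) a) is continuous.\<close>
definition pbs_vec :: "nat pmf \<Rightarrow> (nat \<Rightarrow> real)" where
  "pbs_vec s = (\<lambda>h. pmf s h)"

definition rule_vec :: "game \<Rightarrow> nat list \<Rightarrow> drule \<Rightarrow> (aoh \<times> nat \<Rightarrow> real)" where
  "rule_vec G p d = (\<lambda>(x, a). if x \<in> aohs_at G (pact G p) p then pmf (d x) a else 0)"

definition policy_continuous :: "game \<Rightarrow> policy \<Rightarrow> bool" where
  "policy_continuous G \<pi> \<longleftrightarrow> (\<forall>p\<in>pubs G. \<exists>f.
     continuous_on (pbs_vec ` pbs G p) f \<and>
     (\<forall>s\<in>pbs G p. f (pbs_vec s) = rule_vec G p (\<pi> s)))"

end

theory Submission
  imports Defs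
begin

definition Gex :: game where
  "Gex = \<lparr>hists = {0,1,2,3}, acts = {0,1}, actor = (\<lambda>_. 0),
     aohist = (\<lambda>i h. if h < 2 then [] else [(if i = 0 then Some (h-2) else None, 0)]),
     pubhist = (\<lambda>h. if h < 2 then [] else [0]),
     time = (\<lambda>h. if h < 2 then 0 else 1),
     init = return_pmf 0,
     rew = (\<lambda>h a. if h = a then 1 else 0),
     trans = (\<lambda>h a. return_pmf (a+2)),
     horizon = 1\<rparr>"

lemma wf: "wf_game Gex"
  unfolding wf_game_def Gex_def by auto

lemma hists_at0: "hists_at Gex [] = {0,1}"
  unfolding hists_at_def Gex_def by auto

lemma pact0: "pact Gex [] = 0"
  unfolding pact_def Gex_def by simp

lemma ptime0: "ptime Gex [] = 0"
proof -
  have "(SOME h. h \<in> hists_at Gex []) \<in> {0,1}"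
    unfolding hists_at0 by (rule someI[of _ 0]) simp
  then show ?thesis unfolding ptime_def by (auto simp: Gex_def)
qed

lemma aohs0: "aohs_at Gex 0 [] = {[]}"
  unfolding aohs_at_def hists_at0 by (simp add: Gex_def)

lemma pubs0: "[] \<in> pubs Gex"
  unfolding pubs_def by (force simp: Gex_def)

lemma stage: assumes "set_pmf s \<subseteq> {0,1}" "set_pmf (D []) \<subseteq> {0,1}"
  shows "stage_reward Gex s D = pmf s 0 * pmf (D []) 0 + pmf s 1 * pmf (D []) 1"
proof -
  have inner: "measure_pmf.expectation (D []) (\<lambda>a. rew Gex h a) = pmf (D []) h"
    if "h \<in> {0,1}" for h
    using that assms(2)
    by (subst integral_measure_pmf_real[where A="{0,1}"]) (auto simp: Gex_def)
  have "stage_reward Gex s D = (\<Sum>h\<in>{0,1}. measure_pmf.expectation (D (aohist Gex (actor Gex h) h)) (\<lambda>a. rew Gex h a) * pmf s h)"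
    unfolding stage_reward_def using assms(1)
    by (subst integral_measure_pmf_real[where A="{0,1}"]) auto
  also have "\<dots> = (\<Sum>h\<in>{0::nat,1}. pmf (D []) h * pmf s h)"
    using inner[of 0] inner[of 1] by (simp add: Gex_def)
  finally show ?thesis by simp
qed

lemma val1: "pbs_value Gex \<pi> [] s = stage_reward Gex s (\<pi> s)"
  unfolding pbs_value_def ptime0 by (simp add: Gex_def)


definition sv :: "real \<Rightarrow> nat \<Rightarrow> real" where
  "sv t = (\<lambda>h. if h = 0 then t else if h = 1 then 1 - t else 0)"

definition st :: "real \<Rightarrow> nat pmf" where
  "st t = embed_pmf (sv t)"

lemma pmf_st: assumes "0 \<le> t" "t \<le> 1" shows "pmf (st t) = sv t"
proof -
  have "(\<integral>\<^sup>+x. ennreal (sv t x) \<partial>count_space UNIV) = (\<Sum>x\<in>{0,1}. ennreal (sv t x))"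
    by (rule nn_integral_count_space') (auto simp: sv_def)
  also have "\<dots> = 1" using assms by (simp add: sv_def flip: ennreal_plus)
  finally have "(\<integral>\<^sup>+x. ennreal (sv t x) \<partial>count_space UNIV) = 1" .
  then show ?thesis unfolding st_def
    by (intro ext pmf_embed_pmf) (use assms in \<open>auto simp: sv_def\<close>)
qed

lemma st_pbs: assumes "0 \<le> t" "t \<le> 1" shows "st t \<in> pbs Gex []"
  using pmf_st[OF assms] unfolding pbs_def hists_at0
  by (auto simp: set_pmf_iff sv_def split: if_splits)

lemma pbs_sub: "s \<in> pbs Gex [] \<Longrightarrow> set_pmf s \<subseteq> {0,1}"
  unfolding pbs_def hists_at0 by simp

lemma spe_ineq:
  assumes spe: "is_SPE Gex \<pi>" and s: "s \<in> pbs Gex []" and a: "a \<in> {0,1}"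
  shows "pmf s a \<le> pmf s 0 * pmf (\<pi> s []) 0 + pmf s 1 * pmf (\<pi> s []) 1"
    and "set_pmf (\<pi> s []) \<subseteq> {0,1}"
proof -
  have valid: "valid_policy Gex \<pi>" using spe unfolding is_SPE_def by simp
  show sub: "set_pmf (\<pi> s []) \<subseteq> {0,1}"
  proof -
    have "\<forall>x\<in>aohs_at Gex (pact Gex []) []. set_pmf (\<pi> s x) \<subseteq> acts Gex"
      using valid pubs0 s unfolding valid_policy_def by blast
    then show ?thesis unfolding pact0 aohs0 by (simp add: Gex_def)
  qed
  define \<pi>' where "\<pi>' = (\<lambda>t. if t = s then (\<lambda>x. return_pmf a) else \<pi> t)"
  have "valid_policy Gex \<pi>'"
    using valid a unfolding valid_policy_def \<pi>'_def by (auto simp: Gex_def)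
  moreover have "pact Gex q = 0" for q unfolding pact_def by (simp add: Gex_def)
  ultimately have dev: "deviation Gex 0 \<pi> \<pi>'" unfolding deviation_def by simp
  have "pbs_value Gex \<pi>' [] s \<le> pbs_value Gex \<pi> [] s"
    using spe pubs0 s dev unfolding is_SPE_def by blast
  then have "stage_reward Gex s (\<pi>' s) \<le> stage_reward Gex s (\<pi> s)" by (simp add: val1)
  moreover have "stage_reward Gex s (\<pi>' s) = pmf s a"
    using a pbs_sub[OF s] by (subst stage) (auto simp: \<pi>'_def)
  moreover have "stage_reward Gex s (\<pi> s) = pmf s 0 * pmf (\<pi> s []) 0 + pmf s 1 * pmf (\<pi> s []) 1"
    using sub pbs_sub[OF s] by (subst stage) auto
  ultimately show "pmf s a \<le> pmf s 0 * pmf (\<pi> s []) 0 + pmf s 1 * pmf (\<pi> s []) 1" by simp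
qed

lemma spe_vals:
  assumes spe: "is_SPE Gex \<pi>" and t: "0 \<le> t" "t \<le> 1" "t \<noteq> 1/2"
  shows "pmf (\<pi> (st t) []) 0 = (if t > 1/2 then 1 else 0)"
proof -
  let ?d = "\<pi> (st t) []"
  have s: "st t \<in> pbs Gex []" using st_pbs t by simp
  have i0: "pmf (st t) 0 \<le> pmf (st t) 0 * pmf ?d 0 + pmf (st t) 1 * pmf ?d 1"
    and sub: "set_pmf ?d \<subseteq> {0,1}" using spe_ineq[OF spe s, of 0] by auto
  have i1: "pmf (st t) 1 \<le> pmf (st t) 0 * pmf ?d 0 + pmf (st t) 1 * pmf ?d 1"
    using spe_ineq[OF spe s, of 1] by auto
  have sum1: "pmf ?d 0 + pmf ?d 1 = 1" using sum_pmf_eq_1[OF _ sub] by simp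
  have le1: "pmf ?d 0 \<le> 1" "0 \<le> pmf ?d 0" using pmf_le_1 pmf_nonneg by auto
  have p0: "pmf (st t) 0 = t" and p1: "pmf (st t) 1 = 1 - t" using pmf_st[OF t(1,2)] by (auto simp: sv_def)
  have d1: "pmf ?d 1 = 1 - pmf ?d 0" using sum1 by simp
  have A: "t \<le> t * pmf ?d 0 + (1 - t) * (1 - pmf ?d 0)"
    and B: "1 - t \<le> t * pmf ?d 0 + (1 - t) * (1 - pmf ?d 0)"
    using i0 i1 by (simp_all only: p0 p1 d1)
  show ?thesis
  proof (cases "t > 1/2")
    case True
    from A have "(2*t - 1) * (1 - pmf ?d 0) \<le> 0" by (simp add: algebra_simps)
    then have "1 - pmf ?d 0 \<le> 0" using True by (simp add: mult_le_0_iff)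
    then show ?thesis using le1 True by simp
  next
    case False
    then have F: "t < 1/2" using t by simp
    from B have "(1 - 2*t) * pmf ?d 0 \<le> 0" by (simp add: algebra_simps)
    then have "pmf ?d 0 \<le> 0" using F by (simp add: mult_le_0_iff)
    then show ?thesis using le1 F by simp
  qed
qed

theorem propositionB8:
  shows "\<exists>G :: game. wf_game G \<and> \<not> (\<exists>\<pi>. is_SPE G \<pi> \<and> policy_continuous G \<pi>)"
proof (intro exI conjI notI)
  show "wf_game Gex" by (rule wf)
  fix P assume "\<exists>\<pi>. is_SPE Gex \<pi> \<and> policy_continuous Gex \<pi>"
  then obtain \<pi> where spe: "is_SPE Gex \<pi>" and pc: "policy_continuous Gex \<pi>" by blast
  obtain f where fc: "continuous_on (pbs_vec ` pbs Gex []) f"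
    and fe: "\<And>s. s \<in> pbs Gex [] \<Longrightarrow> f (pbs_vec s) = rule_vec Gex [] (\<pi> s)"
    using pc pubs0 unfolding policy_continuous_def by blast
  define g where "g t = f (sv t) ([], 0)" for t
  have vec: "pbs_vec (st t) = sv t" if "0 \<le> t" "t \<le> 1" for t
    using pmf_st[OF that] unfolding pbs_vec_def by simp
  have gval: "g t = pmf (\<pi> (st t) []) 0" if "0 \<le> t" "t \<le> 1" for t
    using fe[OF st_pbs[OF that]] vec[OF that] unfolding g_def rule_vec_def pact0 aohs0 by simp
  have svc: "continuous_on {0..1} sv"
  proof (rule continuous_on_coordinatewise_then_product)
    fix i show "continuous_on {0..1} (\<lambda>t. sv t i)"
      unfolding sv_def by (cases "i = 0"; cases "i = 1") (auto intro!: continuous_intros)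
  qed
  have img: "sv ` {0..1} \<subseteq> pbs_vec ` pbs Gex []"
  proof
    fix v assume "v \<in> sv ` {0..1}"
    then obtain t where "t \<in> {0..1}" "v = sv t" by auto
    then show "v \<in> pbs_vec ` pbs Gex []"
      using vec st_pbs by (metis atLeastAtMost_iff image_eqI)
  qed
  have "continuous_on {0..1} (\<lambda>t. f (sv t))"
    by (rule continuous_on_compose2[OF fc svc img])
  then have gc: "continuous_on {0..1} g"
    unfolding g_def by (rule continuous_on_product_then_coordinatewise)
  have gc': "continuous_on {1/4..3/4} g" by (rule continuous_on_subset[OF gc]) auto
  have gv: "g t = (if t > 1/2 then 1 else 0)" if "0 \<le> t" "t \<le> 1" "t \<noteq> 1/2" for t
    using gval[OF that(1,2)] spe_vals[OF spe that] by simp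
  have g1: "g (1/4) = 0" and g3: "g (3/4) = 1" using gv by auto
  obtain x where x: "1/4 \<le> x" "x \<le> 3/4" "g x = 1/3"
    using IVT'[of g "1/4" "1/3" "3/4", OF _ _ _ gc'] g1 g3 by auto
  obtain y where y: "1/4 \<le> y" "y \<le> 3/4" "g y = 2/3"
    using IVT'[of g "1/4" "2/3" "3/4", OF _ _ _ gc'] g1 g3 by auto
  have "x = 1/2" using x gv[of x] by (cases "x > 1/2") auto
  moreover have "y = 1/2" using y gv[of y] by (cases "y > 1/2") auto
  ultimately have "x = y" by simp
  then show False using x(3) y(3) by simp
qed

end
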